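(* Let $F(x)=x^4+ax^3+bx+c\in\mathbb{Z}[x]$ be irreducible over $\mathbb{Q}$, $\alpha$ a root of $F$ and $K=\mathbb{Q}(\alpha)$. If any of the following holds: (1) $a\equiv1\pmod8$, $b\equiv3\pmod8$ and $c\equiv7\pmod8$; (2) $a\equiv5\pmod8$ and $b\equiv c\equiv3\pmod 8$ or $b\equiv c\equiv 7\pmod8$; (3) $a\equiv c\equiv7\pmod8$ and $b\equiv5\pmod8$; then $K$ is not monogenic.
   Context: $K$ is monogenic if its ring of integers $\mathcal{O}_K$ equals $\mathbb{Z}[\theta]$ for some $\theta\in\mathcal{O}_K$. *)

theory Defs
  imports Complex_Main "HOL-Computational_Algebra.Computational_Algebra"
begin

definition simple_ext_Q :: "complex \<Rightarrow> complex set" where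
  "simple_ext_Q \<alpha> = {poly (map_poly of_rat p) \<alpha> | p :: rat poly. True}"

definition ring_of_integers :: "complex set \<Rightarrow> complex set" where
  "ring_of_integers K = {x \<in> K. algebraic_int x}"

definition int_poly_ring :: "complex \<Rightarrow> complex set" where
  "int_poly_ring \<theta> = {poly (map_poly of_int p) \<theta> | p :: int poly. True}"

definition monogenic :: "complex set \<Rightarrow> bool" where
  "monogenic K \<longleftrightarrow> (\<exists>\<theta> \<in> ring_of_integers K. ring_of_integers K = int_poly_ring \<theta>)"

end

theory Submission
  imports Defs "Jordan_Normal_Form.Char_Poly" "Berlekamp_Zassenhaus.Finite_Field"
    "HOL-Computational_Algebra.Computational_Algebra" "HOL-Computational_Algebra.Field_as_Ring"
begin
hide_const (open) UnivPoly.coeff UnivPoly.monom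

definition zspan :: "nat \<Rightarrow> (nat \<Rightarrow> complex) \<Rightarrow> complex set" where
  "zspan n g = {(\<Sum>k<n. of_int (c k) * g k) | c. True}"

lemma eigen_algebraic_int:
  fixes g :: "nat \<Rightarrow> complex"
  assumes k0: "k0 < n" "g k0 \<noteq> 0"
    and mul: "\<And>k. k < n \<Longrightarrow> x * g k \<in> zspan n g"
  shows "algebraic_int x"
proof -
  define cf where "cf k = (SOME c. x * g k = (\<Sum>l<n. of_int (c l) * g l))" for k
  have cf: "x * g k = (\<Sum>l<n. of_int (cf k l) * g l)" if "k < n" for k
  proof -
    from mul[OF that] obtain c where "x * g k = (\<Sum>l<n. of_int (c l) * g l)" unfolding zspan_def by auto
    thus ?thesis unfolding cf_def by (rule someI[where P="\<lambda>c. x * g k = (\<Sum>l<n. of_int (c l) * g l)"])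
  qed
  define A :: "int mat" where "A = mat n n (\<lambda>(k,l). cf k l)"
  have A: "A \<in> carrier_mat n n" by (simp add: A_def)
  define B :: "complex mat" where "B = of_int_hom.mat_hom A"
  have B: "B \<in> carrier_mat n n" using A by (simp add: B_def)
  define v where "v = vec n g"
  have "B *\<^sub>v v = x \<cdot>\<^sub>v v"
  proof (rule eq_vecI)
    fix i assume i: "i < dim_vec (x \<cdot>\<^sub>v v)"
    hence i': "i < n" by (simp add: v_def)
    have "(B *\<^sub>v v) $ i = (\<Sum>l<n. of_int (cf i l) * g l)"
      using i' by (simp add: B_def A_def v_def mult_mat_vec_def scalar_prod_def atLeast0LessThan)
    also have "\<dots> = (x \<cdot>\<^sub>v v) $ i" using cf[OF i'] i' by (simp add: v_def)
    finally show "(B *\<^sub>v v) $ i = (x \<cdot>\<^sub>v v) $ i" .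
  qed (simp add: B_def A_def v_def)
  moreover have "v \<in> carrier_vec n" "v \<noteq> 0\<^sub>v n"
    using k0 by (auto simp: v_def vec_eq_iff)
  ultimately have "eigenvector B v x" unfolding eigenvector_def using B by auto
  hence "eigenvalue B x" unfolding eigenvalue_def by auto
  hence "poly (char_poly B) x = 0" using eigenvalue_root_char_poly[OF B] by simp
  also have "char_poly B = map_poly of_int (char_poly A)"
    unfolding B_def by (rule of_int_hom.char_poly_hom[OF A])
  finally have r: "poly (map_poly of_int (char_poly A)) x = 0" .
  have "lead_coeff (char_poly A) = 1" using degree_monic_char_poly[OF A] by simp
  with r show ?thesis by (auto simp: algebraic_int_altdef_ipoly)
qed

lemma zspanI: "s = (\<Sum>k<n. of_int (c k) * g k) \<Longrightarrow> s \<in> zspan n g"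
  unfolding zspan_def by blast

lemma zspan_0: "0 \<in> zspan n g"
  unfolding zspan_def by (rule CollectI, rule exI[of _ "\<lambda>_. 0"]) simp

lemma zspan_add: assumes "s \<in> zspan n g" "t \<in> zspan n g" shows "s + t \<in> zspan n g"
proof -
  from assms obtain c d where "s = (\<Sum>k<n. of_int (c k) * g k)" "t = (\<Sum>k<n. of_int (d k) * g k)"
    unfolding zspan_def by auto
  hence "s + t = (\<Sum>k<n. of_int (c k + d k) * g k)" by (simp add: sum.distrib distrib_right)
  thus ?thesis by (rule zspanI)
qed

lemma zspan_smult: assumes "s \<in> zspan n g" shows "of_int m * s \<in> zspan n g"
proof -
  from assms obtain c where "s = (\<Sum>k<n. of_int (c k) * g k)"
    unfolding zspan_def by auto
  hence "of_int m * s = (\<Sum>k<n. of_int (m * c k) * g k)" by (simp add: sum_distrib_left mult.assoc)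
  thus ?thesis by (rule zspanI)
qed

lemma zspan_uminus: "s \<in> zspan n g \<Longrightarrow> - s \<in> zspan n g"
  using zspan_smult[of s n g "-1"] by simp

lemma zspan_diff: "s \<in> zspan n g \<Longrightarrow> t \<in> zspan n g \<Longrightarrow> s - t \<in> zspan n g"
  using zspan_add[of s n g "-t"] zspan_uminus[of t n g] by simp

lemma zspan_gen: assumes "k < n" shows "g k \<in> zspan n g"
proof -
  have "(\<Sum>l<n. of_int (if l = k then 1 else 0) * g l) = (\<Sum>l<n. if l = k then g l else 0)"
    by (rule sum.cong) auto
  also have "\<dots> = g k" using assms by (simp add: sum.delta)
  finally have "g k = (\<Sum>l<n. of_int (if l = k then 1 else 0) * g l)" by simp
  thus ?thesis by (rule zspanI)
qed

lemma zspan_sum: "(\<And>i. i \<in> I \<Longrightarrow> f i \<in> zspan n g) \<Longrightarrow> sum f I \<in> zspan n g"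
  by (induction I rule: infinite_finite_induct) (auto intro: zspan_0 zspan_add)

definition mulS :: "nat \<Rightarrow> (nat \<Rightarrow> complex) \<Rightarrow> complex \<Rightarrow> bool" where
  "mulS n g t \<longleftrightarrow> (\<forall>k<n. t * g k \<in> zspan n g)"

lemma mulS_zspan: assumes "mulS n g t" "s \<in> zspan n g" shows "t * s \<in> zspan n g"
proof -
  from assms(2) obtain c where s: "s = (\<Sum>k<n. of_int (c k) * g k)" unfolding zspan_def by auto
  have "t * s = (\<Sum>k<n. of_int (c k) * (t * g k))" by (simp add: s sum_distrib_left mult_ac)
  also have "\<dots> \<in> zspan n g" using assms(1) unfolding mulS_def
    by (intro zspan_sum zspan_smult) auto
  finally show ?thesis .
qed

lemma mulS_add: "mulS n g s \<Longrightarrow> mulS n g t \<Longrightarrow> mulS n g (s + t)"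
  unfolding mulS_def by (auto simp: distrib_right intro: zspan_add)

lemma mulS_mult: assumes "mulS n g s" "mulS n g t" shows "mulS n g (s * t)"
  unfolding mulS_def
proof (intro allI impI)
  fix k assume "k < n"
  hence "t * g k \<in> zspan n g" using assms(2) by (auto simp: mulS_def)
  from mulS_zspan[OF assms(1) this] show "s * t * g k \<in> zspan n g" by (simp add: mult.assoc)
qed

lemma mulS_of_int: "mulS n g (of_int m)"
  unfolding mulS_def by (auto intro: zspan_smult zspan_gen)

lemma mulS_numeral: "mulS n g (numeral m)"
  using mulS_of_int[of n g "numeral m"] by simp

lemma mulS_1: "mulS n g 1"
  using mulS_of_int[of n g 1] by simp

lemma mulS_uminus: "mulS n g s \<Longrightarrow> mulS n g (- s)"
  unfolding mulS_def using zspan_uminus by fastforce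

lemma mulS_diff: "mulS n g s \<Longrightarrow> mulS n g t \<Longrightarrow> mulS n g (s - t)"
  using mulS_add[of n g s "-t"] mulS_uminus[of n g t] by simp

lemma mulS_power: "mulS n g s \<Longrightarrow> mulS n g (s ^ m)"
  by (induction m) (auto intro: mulS_mult mulS_1)

lemmas mulS_intros = mulS_add mulS_mult mulS_of_int mulS_numeral mulS_1 mulS_uminus mulS_diff mulS_power

lemma mulS_algebraic_int:
  assumes "k0 < n" "g k0 \<noteq> 0" "mulS n g x" shows "algebraic_int x"
  using assms by (intro eigen_algebraic_int[of k0 n g]) (auto simp: mulS_def)


lemma monic_root_power:
  fixes x :: complex and P :: "int poly"
  assumes "poly (map_poly of_int P) x = 0" "lead_coeff P = 1"
  shows "x ^ degree P = - (\<Sum>m<degree P. of_int (coeff P m) * x ^ m)"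
proof -
  have "0 = (\<Sum>m\<le>degree P. of_int (coeff P m) * x ^ m)"
    using assms(1) by (simp add: poly_altdef degree_map_poly coeff_map_poly)
  also have "\<dots> = (\<Sum>m<degree P. of_int (coeff P m) * x ^ m) + x ^ degree P"
    using assms(2) by (simp add: lessThan_Suc_atMost[symmetric])
  finally show ?thesis by (simp add: eq_neg_iff_add_eq_0 add.commute)
qed

lemma algebraic_int_mult_gen:
  fixes x y :: complex
  assumes x: "algebraic_int x" and y: "algebraic_int y"
  shows "algebraic_int (x * y)"
proof -
  obtain P where P: "poly (map_poly of_int P) x = 0" "lead_coeff P = 1"
    using x by (auto simp: algebraic_int_altdef_ipoly)
  obtain Q where Q: "poly (map_poly of_int Q) y = 0" "lead_coeff Q = 1"
    using y by (auto simp: algebraic_int_altdef_ipoly)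
  define d1 where "d1 = degree P"
  define d2 where "d2 = degree Q"
  have "d1 > 0"
  proof (rule ccontr)
    assume "\<not> d1 > 0" hence "degree P = 0" by (simp add: d1_def)
    thus False using monic_root_power[OF P] by simp
  qed
  have "d2 > 0"
  proof (rule ccontr)
    assume "\<not> d2 > 0" hence "degree Q = 0" by (simp add: d2_def)
    thus False using monic_root_power[OF Q] by simp
  qed
  define n where "n = d1 * d2"
  define g where "g k = x ^ (k mod d1) * y ^ (k div d1)" for k
  have gen: "x ^ i * y ^ j \<in> zspan n g" if "i < d1" "j < d2" for i j
  proof -
    have "i + d1 * j < d1 + d1 * j" using that by simp
    also have "\<dots> = d1 * Suc j" by simp
    also have "\<dots> \<le> d1 * d2" using that by (intro mult_le_mono2) simp
    finally have "i + d1 * j < n" by (simp add: n_def)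
    moreover have "g (i + d1 * j) = x ^ i * y ^ j" using that by (simp add: g_def)
    ultimately show ?thesis using zspan_gen by metis
  qed
  have xpow: "x ^ d1 * y ^ j \<in> zspan n g" if "j < d2" for j
  proof -
    have "x ^ d1 * y ^ j = - (\<Sum>m<d1. of_int (coeff P m) * (x ^ m * y ^ j))"
      using monic_root_power[OF P] by (simp add: d1_def sum_distrib_left sum_distrib_right mult_ac)
    also have "\<dots> \<in> zspan n g" using that by (intro zspan_uminus zspan_sum zspan_smult gen) auto
    finally show ?thesis .
  qed
  have ypow: "x ^ i * y ^ d2 \<in> zspan n g" if "i < d1" for i
  proof -
    have "x ^ i * y ^ d2 = - (\<Sum>m<d2. of_int (coeff Q m) * (x ^ i * y ^ m))"
      using monic_root_power[OF Q] by (simp add: d2_def sum_distrib_left sum_distrib_right mult_ac)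
    also have "\<dots> \<in> zspan n g" using that by (intro zspan_uminus zspan_sum zspan_smult gen) auto
    finally show ?thesis .
  qed
  have k_split: "k mod d1 < d1 \<and> k div d1 < d2" if "k < n" for k
    using that \<open>d1 > 0\<close> by (simp add: n_def less_mult_imp_div_less mult.commute)
  have "mulS n g x" unfolding mulS_def
  proof (intro allI impI)
    fix k assume k: "k < n"
    from k_split[OF k] have i: "k mod d1 < d1" and j: "k div d1 < d2" by auto
    show "x * g k \<in> zspan n g"
    proof (cases "Suc (k mod d1) < d1")
      case True thus ?thesis using gen[OF True j] by (simp add: g_def mult.assoc)
    next
      case False hence "Suc (k mod d1) = d1" using i by simp
      hence eq: "x * (x ^ (k mod d1) * y ^ (k div d1)) = x ^ d1 * y ^ (k div d1)"
        by (metis mult.assoc power_Suc)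
      have gk: "g k = x ^ (k mod d1) * y ^ (k div d1)" by (simp add: g_def)
      show ?thesis unfolding gk eq using xpow[OF j] .
    qed
  qed
  moreover have "mulS n g y" unfolding mulS_def
  proof (intro allI impI)
    fix k assume k: "k < n"
    from k_split[OF k] have i: "k mod d1 < d1" and j: "k div d1 < d2" by auto
    show "y * g k \<in> zspan n g"
    proof (cases "Suc (k div d1) < d2")
      case True thus ?thesis using gen[OF i True] by (simp add: g_def mult_ac)
    next
      case False hence "Suc (k div d1) = d2" using j by simp
      hence eq: "y * (x ^ (k mod d1) * y ^ (k div d1)) = x ^ (k mod d1) * y ^ d2"
        by (metis mult.left_commute power_Suc)
      have gk: "g k = x ^ (k mod d1) * y ^ (k div d1)" by (simp add: g_def)
      show ?thesis unfolding gk eq using ypow[OF i] .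
    qed
  qed
  ultimately have "mulS n g (x * y)" by (rule mulS_mult)
  moreover have "0 < n" using \<open>d1 > 0\<close> \<open>d2 > 0\<close> by (simp add: n_def)
  moreover have "g 0 = 1" by (simp add: g_def)
  ultimately show ?thesis by (intro mulS_algebraic_int[of 0 n g]) auto
qed

lemma algebraic_int_prod_list:
  "(\<And>z. z \<in> set zs \<Longrightarrow> algebraic_int (z :: complex)) \<Longrightarrow> algebraic_int (prod_list zs)"
  by (induction zs) (auto intro: algebraic_int_mult_gen int_imp_algebraic_int)


interpretation of_rat_poly_hom: map_poly_comm_ring_hom "of_rat :: rat \<Rightarrow> 'a :: field_char_0" ..

lemma irreducible_common_root_dvd:
  fixes f g :: "rat poly" and x :: complex
  assumes irr: "irreducible f" and f: "poly (map_poly of_rat f) x = 0" and g: "poly (map_poly of_rat g) x = 0"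
  shows "f dvd g"
proof -
  define d where "d = gcd f g"
  have "d dvd f" by (simp add: d_def)
  then obtain k where fk: "f = d * k" by (auto elim: dvdE)
  from irreducibleD[OF irr fk] have "is_unit d \<or> is_unit k" .
  thus ?thesis
  proof
    assume "is_unit k"
    hence "f dvd d" using fk by (metis dvd_mult_unit_iff dvd_refl)
    also have "d dvd g" by (simp add: d_def)
    finally show ?thesis .
  next
    assume u: "is_unit d"
    from u have "\<exists>c. d = [:c:] \<and> c dvd 1" by (simp only: is_unit_poly_iff)
    then obtain c where dc0: "d = [:c:]" "c dvd 1" by blast
    hence dc: "d = [:c:]" "c \<noteq> 0" by auto
    have "fst (bezout_coefficients f g) * f + snd (bezout_coefficients f g) * g = d"
      unfolding d_def by (rule bezout_coefficients_fst_snd)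
    hence "poly (map_poly of_rat (fst (bezout_coefficients f g) * f + snd (bezout_coefficients f g) * g)) x
           = poly (map_poly of_rat d) x" by simp
    hence "(of_rat c :: complex) = 0" using f g dc by (simp add: hom_distribs)
    with dc show ?thesis by simp
  qed
qed

lemma conj_algebraic_int:
  fixes FQ s :: "rat poly" and x z :: complex
  assumes irr: "irreducible FQ" and x: "poly (map_poly of_rat FQ) x = 0" and z: "poly (map_poly of_rat FQ) z = 0"
    and ai: "algebraic_int (poly (map_poly of_rat s) x)"
  shows "algebraic_int (poly (map_poly of_rat s) z)"
proof -
  obtain P where P: "poly (map_poly of_int P) (poly (map_poly of_rat s) x) = 0" "lead_coeff P = 1"
    using ai by (auto simp: algebraic_int_altdef_ipoly)
  define T where "T = pcompose (map_poly of_int P) s"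
  have T: "poly (map_poly of_rat T) w = poly (map_poly of_int P) (poly (map_poly of_rat s) w)" for w :: complex
    by (simp add: T_def of_rat_hom.map_poly_pcompose poly_pcompose map_poly_map_poly o_def)
  have "poly (map_poly of_rat T) x = 0" using T P(1) by simp
  hence "FQ dvd T" using irreducible_common_root_dvd[OF irr x] by blast
  then obtain R where "T = FQ * R" by (auto elim: dvdE)
  hence "poly (map_poly of_rat T) z = 0" using z by (simp add: hom_distribs)
  hence "poly (map_poly of_int P) (poly (map_poly of_rat s) z) = 0" by (simp add: T)
  with P(2) show ?thesis by (auto simp: algebraic_int_altdef_ipoly)
qed

lemma exists_quad_roots: "\<exists>r1 r2::complex. r1 + r2 = -p \<and> r1 * r2 = q"
proof (intro exI conjI)
  let ?s = "csqrt (p^2 - 4*q)"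
  show "(-p + ?s)/2 + (-p - ?s)/2 = -p" by (simp add: field_simps)
  have "?s^2 = p^2 - 4*q" by (rule power2_csqrt)
  thus "(-p + ?s)/2 * ((-p - ?s)/2) = q" by (simp add: field_simps power2_eq_square)
qed

lemma poly_linear_prod: "poly (\<Prod>z\<leftarrow>as. [:-z,1:]) t = (\<Prod>z\<leftarrow>as. t - (z::complex))"
  by (induction as) (auto simp: algebra_simps)

lemma prod_list_neg: "(\<Prod>z\<leftarrow>as. t - z) = (-1)^length as * (\<Prod>z\<leftarrow>as. z - (t::complex))"
  by (induction as) (auto simp: algebra_simps)

lemma prod_list_mult_map: "(\<Prod>z\<leftarrow>as. f z * g z) = (\<Prod>z\<leftarrow>as. f z) * (\<Prod>z\<leftarrow>as. (g z :: complex))"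
  by (induction as) (auto simp: mult_ac)

lemma prod_list_div_const: "(\<Prod>z\<leftarrow>as. f z / d) = (\<Prod>z\<leftarrow>as. f z) / d ^ length as" for d :: complex
  by (induction as) auto

lemma norm_quadratic:
  fixes F :: "int poly" and as :: "complex list"
  assumes roots: "map_poly of_int F = (\<Prod>z\<leftarrow>as. [:-z,1:])" and len: "even (length as)"
    and r: "r1 + r2 = -p" "r1 * r2 = q"
  shows "(\<Prod>z\<leftarrow>as. z^2 + p*z + q) = poly (map_poly of_int F) r1 * poly (map_poly of_int F) r2"
proof -
  have ev: "(\<Prod>z\<leftarrow>as. z - t) = poly (map_poly of_int F) t" for t
  proof -
    have "poly (map_poly of_int F) t = (\<Prod>z\<leftarrow>as. t - z)" unfolding roots by (rule poly_linear_prod)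
    also have "\<dots> = (-1)^length as * (\<Prod>z\<leftarrow>as. z - t)" by (rule prod_list_neg)
    finally show ?thesis using len by simp
  qed
  have "(\<Prod>z\<leftarrow>as. z^2 + p*z + q) = (\<Prod>z\<leftarrow>as. (z - r1) * (z - r2))"
  proof (rule arg_cong[where f=prod_list], rule map_cong)
    fix z
    have p: "p = -(r1+r2)" using r(1) by simp
    show "z^2 + p*z + q = (z - r1) * (z - r2)"
      unfolding p r(2)[symmetric] by (simp add: algebra_simps power2_eq_square)
  qed simp
  also have "\<dots> = (\<Prod>z\<leftarrow>as. z - r1) * (\<Prod>z\<leftarrow>as. z - r2)" by (rule prod_list_mult_map)
  finally show ?thesis by (simp add: ev)
qed

lemma norm_linear:
  fixes F :: "int poly" and as :: "complex list"
  assumes roots: "map_poly of_int F = (\<Prod>z\<leftarrow>as. [:-z,1:])" and len: "even (length as)"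
  shows "(\<Prod>z\<leftarrow>as. z - t) = poly (map_poly of_int F) t"
proof -
  have "poly (map_poly of_int F) t = (\<Prod>z\<leftarrow>as. t - z)" unfolding roots by (rule poly_linear_prod)
  also have "\<dots> = (-1)^length as * (\<Prod>z\<leftarrow>as. z - t)" by (rule prod_list_neg)
  finally show ?thesis using len by simp
qed

lemma not_algebraic_int_by_norm:
  fixes FQ s :: "rat poly" and x :: complex and N :: int
  assumes irr: "irreducible FQ" and x: "poly (map_poly of_rat FQ) x = 0"
    and roots: "\<And>z::complex. z \<in> set as \<Longrightarrow> poly (map_poly of_rat FQ) z = 0"
    and nrm: "(\<Prod>z\<leftarrow>as. poly (map_poly of_rat s) z) = of_int N / 16"
    and nd: "\<not> 16 dvd N"
  shows "\<not> algebraic_int (poly (map_poly of_rat s) x)"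
proof
  assume ai: "algebraic_int (poly (map_poly of_rat s) x)"
  have "algebraic_int (\<Prod>z\<leftarrow>as. poly (map_poly of_rat s) z)"
    using conj_algebraic_int[OF irr x roots ai] by (intro algebraic_int_prod_list) auto
  moreover have "(\<Prod>z\<leftarrow>as. poly (map_poly of_rat s) z) \<in> \<rat>" unfolding nrm by simp
  ultimately have "of_int N / 16 \<in> (\<int> :: complex set)" using rational_algebraic_int_is_int nrm by metis
  then obtain m where "(of_int N / 16 :: complex) = of_int m" by (auto elim: Ints_cases)
  hence "(of_int N :: complex) = of_int (16 * m)" by (simp add: field_simps)
  hence "N = 16 * m" by (simp only: of_int_eq_iff)
  with nd show False by simp
qed


type_synonym gf2 = "bool mod_ring"

lemma gf2_cases: "(x::gf2) = 0 \<or> x = 1"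
proof -
  have "Rep_mod_ring x \<in> {0..<int CARD(bool)}" using Rep_mod_ring by blast
  hence "Rep_mod_ring x = 0 \<or> Rep_mod_ring x = 1" by auto
  thus ?thesis
    by (metis Rep_mod_ring_inverse zero_mod_ring.abs_eq one_mod_ring.abs_eq)
qed

lemma gf2_two: "(2::gf2) = 0"
proof -
  have "(1::gf2) + 1 \<noteq> 1"
  proof
    assume "(1::gf2) + 1 = 1"
    hence "(1::gf2) + 1 = 1 + 0" by simp
    hence "(1::gf2) = 0" by (simp only: add_left_cancel)
    thus False by simp
  qed
  hence "(1::gf2) + 1 = 0" using gf2_cases by blast
  thus ?thesis by (simp add: one_add_one)
qed

lemma gf2_of_int_even: "even k \<Longrightarrow> (of_int k :: gf2) = 0"
  using gf2_two by (auto elim!: evenE)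

lemma gf2_of_int_odd: "odd k \<Longrightarrow> (of_int k :: gf2) = 1"
  using gf2_two by (auto elim!: oddE)

lemma gf2_deg1_root:
  fixes p :: "gf2 poly" assumes "degree p = 1" shows "\<exists>r. poly p r = 0"
proof -
  have "p \<noteq> 0" using assms by auto
  hence "coeff p (degree p) \<noteq> 0" by simp
  hence c1: "coeff p 1 \<noteq> 0" using assms by simp
  have "poly p x = coeff p 0 + coeff p 1 * x" for x
    using assms by (simp add: poly_altdef atMost_Suc)
  hence "poly p (- coeff p 0 / coeff p 1) = 0" using c1 by simp
  thus ?thesis by blast
qed

lemma gf2_noroot_deg_ge2:
  fixes p :: "gf2 poly" assumes "\<forall>r. poly p r \<noteq> 0" "\<not> is_unit p"
  shows "degree p \<ge> 2"
proof (rule ccontr)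
  assume "\<not> degree p \<ge> 2"
  hence "degree p = 0 \<or> degree p = 1" by auto
  thus False
  proof
    assume "degree p = 0"
    then obtain c where "p = [:c:]" by (metis degree_eq_zeroE)
    moreover have "p \<noteq> 0" using assms(1) by auto
    ultimately show False using assms(2) by (auto simp: is_unit_poly_iff)
  next
    assume "degree p = 1" thus False using gf2_deg1_root assms(1) by blast
  qed
qed

lemma gf2_deg2_noroot:
  fixes p :: "gf2 poly" assumes "degree p = 2" "\<forall>r. poly p r \<noteq> 0"
  shows "p = [:1,1,1:]"
proof -
  have ev: "poly p x = coeff p 0 + coeff p 1 * x + coeff p 2 * x^2" for x
    using assms(1) by (simp add: poly_altdef atMost_Suc numeral_2_eq_2)
  have "p \<noteq> 0" using assms by auto
  hence "coeff p (degree p) \<noteq> 0" by simp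
  hence "coeff p 2 \<noteq> 0" using assms by simp
  hence c2: "coeff p 2 = 1" using gf2_cases by blast
  have "coeff p 0 \<noteq> 0" using assms(2) ev[of 0] by auto
  hence c0: "coeff p 0 = 1" using gf2_cases by blast
  have "coeff p 0 + coeff p 1 + coeff p 2 \<noteq> 0" using assms(2) ev[of 1] by auto
  hence "coeff p 1 \<noteq> 0"
  proof (rule contrapos_nn)
    assume "coeff p 1 = 0"
    hence "coeff p 0 + coeff p 1 + coeff p 2 = 1 + 1" using c0 c2 by simp
    also have "(1::gf2) + 1 = 0" using gf2_two by (simp add: one_add_one)
    finally show "coeff p 0 + coeff p 1 + coeff p 2 = 0" .
  qed
  hence c1: "coeff p 1 = 1" using gf2_cases by blast
  show ?thesis
  proof (rule poly_eqI)
    fix n show "coeff p n = coeff [:1,1,1:] n"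
    proof (cases "n \<le> 2")
      case True hence "n = 0 \<or> n = 1 \<or> n = 2" by auto
      thus ?thesis using c0 c1 c2 by (auto simp: numeral_2_eq_2)
    next
      case False thus ?thesis using assms(1) by (auto simp: coeff_eq_0 coeff_pCons split: nat.splits)
    qed
  qed
qed

lemma gf2_final:
  fixes h E :: "gf2 poly"
  assumes h0: "h \<noteq> 0" and hdeg: "degree h \<le> 4" and hroot: "\<forall>r. poly h r \<noteq> 0"
    and hE: "h dvd E * (E - 1)" and nE: "\<not> h dvd E" and nE1: "\<not> h dvd (E - 1)"
  shows False
proof -
  have hnu: "\<not> is_unit h" using nE unit_imp_dvd by blast
  obtain \<pi> where pi: "prime \<pi>" "\<pi> dvd h" using prime_divisorE[OF h0 hnu] by blast
  then obtain k where hk: "h = \<pi> * k" by (auto elim: dvdE)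
  have noroot_div: "\<forall>r. poly q r \<noteq> 0" if "q dvd h" for q
  proof
    fix r from that obtain m where "h = q * m" unfolding dvd_def by blast
    hence "poly h r = poly q r * poly m r" by simp
    thus "poly q r \<noteq> 0" using hroot by auto
  qed
  have k0: "k \<noteq> 0" using hk h0 by auto
  have pi0: "\<pi> \<noteq> 0" using pi by auto
  have pinu: "\<not> is_unit \<pi>" using pi(1) not_prime_unit by blast
  have dpi: "degree \<pi> \<ge> 2" using gf2_noroot_deg_ge2 noroot_div[OF pi(2)] pinu by blast
  have deg: "degree h = degree \<pi> + degree k" using hk pi0 k0 by (simp add: degree_mult_eq)
  have "\<pi> dvd E * (E - 1)" using pi(2) hE by (rule dvd_trans)
  hence piE: "\<pi> dvd E \<or> \<pi> dvd E - 1" using pi(1) by (simp add: prime_dvd_mult_iff)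
  have kdvd: "k dvd h" using hk by simp
  show False
  proof (cases "is_unit k")
    case True
    hence "h dvd \<pi>" using hk by (simp add: mult_unit_dvd_iff)
    from piE show False
    proof
      assume "\<pi> dvd E" with \<open>h dvd \<pi>\<close> have "h dvd E" by (rule dvd_trans)
      with nE show False ..
    next
      assume "\<pi> dvd E - 1" with \<open>h dvd \<pi>\<close> have "h dvd E - 1" by (rule dvd_trans)
      with nE1 show False ..
    qed
  next
    case False
    have dk: "degree k \<ge> 2" using gf2_noroot_deg_ge2 noroot_div[OF kdvd] False by blast
    have "degree \<pi> = 2" "degree k = 2" using deg dk dpi hdeg by auto
    hence pq: "\<pi> = [:1,1,1:]" "k = [:1,1,1:]"
      using gf2_deg2_noroot noroot_div[OF pi(2)] noroot_div[OF kdvd] by blast+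
    hence hpi: "h = \<pi>^2" using hk by (simp add: power2_eq_square)
    have not_both: "\<not> (\<pi> dvd E \<and> \<pi> dvd E - 1)"
    proof
      assume "\<pi> dvd E \<and> \<pi> dvd E - 1"
      hence "\<pi> dvd E - (E - 1)" by (blast intro: dvd_diff)
      hence "\<pi> dvd 1" by simp
      with pinu show False by simp
    qed
    from piE show False
    proof
      assume a: "\<pi> dvd E"
      hence "\<not> \<pi> dvd E - 1" using not_both by blast
      hence "coprime \<pi> (E - 1)" using pi(1) by (simp add: prime_imp_coprime)
      hence "coprime h (E - 1)" unfolding hpi by simp
      hence "h dvd E" using hE by (simp add: coprime_dvd_mult_left_iff)
      with nE show False by simp
    next
      assume a: "\<pi> dvd E - 1"
      hence "\<not> \<pi> dvd E" using not_both by blast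
      hence "coprime \<pi> E" using pi(1) by (simp add: prime_imp_coprime)
      hence "coprime h E" unfolding hpi by simp
      hence "h dvd E - 1" using hE by (simp add: coprime_dvd_mult_right_iff)
      with nE1 show False by simp
    qed
  qed
qed


lemma common_denom: fixes p :: "rat poly" shows "\<exists>d::int. d > 0 \<and> (\<forall>i. of_int d * coeff p i \<in> \<int>)"
proof (induction p)
  case 0 show ?case by (intro exI[of _ 1]) auto
next
  case (pCons a p)
  then obtain d where d: "d > 0" "\<forall>i. of_int d * coeff p i \<in> \<int>" by blast
  obtain n m where nm: "quotient_of a = (n, m)" by (cases "quotient_of a")
  have m: "m > 0" using quotient_of_denom_pos[OF nm] .
  have a: "a = of_int n / of_int m" using quotient_of_div[OF nm] .
  show ?case
  proof (intro exI[of _ "d * m"] conjI allI)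
    show "d * m > 0" using d m by simp
    fix i show "of_int (d * m) * coeff (pCons a p) i \<in> \<int>"
    proof (cases i)
      case 0
      have "of_int (d * m) * coeff (pCons a p) i = of_int (d * n)" using 0 m a by simp
      thus ?thesis by (metis Ints_of_int)
    next
      case (Suc j)
      have "of_int (d * m) * coeff p j = of_int m * (of_int d * coeff p j)" by simp
      also have "\<dots> \<in> \<int>" by (rule Ints_mult[OF Ints_of_int d(2)[rule_format]])
      finally show ?thesis using Suc by simp
    qed
  qed
qed

lemma rat_poly_root_to_int:
  fixes p :: "rat poly" and \<theta> :: complex
  assumes "p \<noteq> 0" and root: "poly (map_poly of_rat p) \<theta> = 0"
  shows "\<exists>r::int poly. content r = 1 \<and> degree r = degree p \<and> poly (map_poly of_int r) \<theta> = 0"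
proof -
  obtain d where d: "d > 0" "\<forall>i. of_int d * coeff p i \<in> \<int>" using common_denom by blast
  define r0 where "r0 = map_poly (\<lambda>x. \<lfloor>of_int d * x\<rfloor>) p"
  have r0: "map_poly of_int r0 = Polynomial.smult (of_int d) p"
  proof (rule poly_eqI)
    fix i
    have "of_int \<lfloor>of_int d * coeff p i\<rfloor> = of_int d * coeff p i" using d(2) by (metis Ints_cases floor_of_int)
    thus "coeff (map_poly of_int r0) i = coeff (Polynomial.smult (of_int d) p) i"
      by (simp add: r0_def coeff_map_poly)
  qed
  have r00: "r0 \<noteq> 0" using r0 assms(1) d(1) by auto
  have "degree (map_poly (of_int :: int \<Rightarrow> rat) r0) = degree p" using r0 d(1) by simp
  hence dr0: "degree r0 = degree p" by simp
  have "poly (map_poly (of_int :: int \<Rightarrow> complex) r0) \<theta> = poly (map_poly of_rat (map_poly of_int r0)) \<theta>"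
    by (simp add: map_poly_map_poly o_def)
  also have "\<dots> = of_int d * poly (map_poly of_rat p) \<theta>" unfolding r0 by (simp add: hom_distribs)
  also have "\<dots> = 0" using root by simp
  finally have z: "poly (map_poly (of_int :: int \<Rightarrow> complex) r0) \<theta> = 0" .
  define r where "r = primitive_part r0"
  have e: "poly (map_poly (of_int::int\<Rightarrow>complex) (Polynomial.smult (content r0) r)) \<theta> = of_int (content r0) * poly (map_poly of_int r) \<theta>"
    by (simp add: of_int_hom.map_poly_hom_smult)
  have "Polynomial.smult (content r0) r = r0" by (simp add: r_def)
  with e have "poly (map_poly (of_int :: int \<Rightarrow> complex) r0) \<theta> = of_int (content r0) * poly (map_poly of_int r) \<theta>"
    by simp
  hence "poly (map_poly (of_int :: int \<Rightarrow> complex) r) \<theta> = 0" using z r00 by simp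
  thus ?thesis using r00 dr0 by (intro exI[of _ r]) (auto simp: r_def)
qed

lemma poly_sum_lessThan:
  fixes r :: "'a::comm_ring_1 poly"
  assumes "degree r < n" shows "poly r x = (\<Sum>k<n. coeff r k * x ^ k)"
proof -
  have "poly r x = (\<Sum>k\<le>degree r. coeff r k * x ^ k)" by (simp add: poly_altdef)
  also have "\<dots> = (\<Sum>k<n. coeff r k * x ^ k)"
    using assms by (intro sum.mono_neutral_left) (auto simp: coeff_eq_0)
  finally show ?thesis .
qed

lemma field_elem_charpoly:
  fixes FQ q :: "rat poly" and \<alpha> \<theta> :: complex
  assumes deg: "degree FQ = n" "n > 0" and root: "poly (map_poly of_rat FQ) \<alpha> = 0"
    and th: "\<theta> = poly (map_poly of_rat q) \<alpha>"
  shows "\<exists>\<chi>::rat poly. \<chi> \<noteq> 0 \<and> degree \<chi> = n \<and> poly (map_poly of_rat \<chi>) \<theta> = 0"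
proof -
  have F0: "FQ \<noteq> 0" using deg by auto
  have modev: "poly (map_poly of_rat (p mod FQ)) \<alpha> = poly (map_poly of_rat p) \<alpha>" for p
  proof -
    have "poly (map_poly of_rat p) \<alpha> = poly (map_poly of_rat (p div FQ * FQ + p mod FQ)) \<alpha>" by simp
    also have "\<dots> = poly (map_poly of_rat (p div FQ)) \<alpha> * poly (map_poly of_rat FQ) \<alpha> + poly (map_poly of_rat (p mod FQ)) \<alpha>"
      by (simp only: of_rat_poly_hom.hom_add of_rat_poly_hom.hom_mult poly_add poly_mult)
    also have "\<dots> = poly (map_poly of_rat (p mod FQ)) \<alpha>" using root by simp
    finally show ?thesis by simp
  qed
  have moddeg: "degree (p mod FQ) < n" for p
    using degree_mod_less[OF F0, of p] deg by auto
  define M :: "rat mat" where "M = mat n n (\<lambda>(j,k). coeff ((q * monom 1 j) mod FQ) k)"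
  have M: "M \<in> carrier_mat n n" by (simp add: M_def)
  define B :: "complex mat" where "B = of_rat_hom.mat_hom M"
  have B: "B \<in> carrier_mat n n" using M by (simp add: B_def)
  define v where "v = vec n (\<lambda>k. \<alpha> ^ k)"
  have "B *\<^sub>v v = \<theta> \<cdot>\<^sub>v v"
  proof (rule eq_vecI)
    fix j assume "j < dim_vec (\<theta> \<cdot>\<^sub>v v)"
    hence j: "j < n" by (simp add: v_def)
    have "(B *\<^sub>v v) $ j = (\<Sum>k<n. of_rat (coeff ((q * monom 1 j) mod FQ) k) * \<alpha> ^ k)"
      using j by (simp add: B_def M_def v_def mult_mat_vec_def scalar_prod_def atLeast0LessThan)
    also have "\<dots> = (\<Sum>k<n. coeff (map_poly of_rat ((q * monom 1 j) mod FQ)) k * \<alpha> ^ k)"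
      by simp
    also have "\<dots> = poly (map_poly of_rat ((q * monom 1 j) mod FQ)) \<alpha>"
      by (rule poly_sum_lessThan[symmetric]) (simp add: moddeg)
    also have "\<dots> = poly (map_poly of_rat (q * monom 1 j)) \<alpha>" by (rule modev)
    also have "\<dots> = \<theta> * \<alpha> ^ j" by (simp add: th hom_distribs poly_monom)
    also have "\<dots> = (\<theta> \<cdot>\<^sub>v v) $ j" using j by (simp add: v_def)
    finally show "(B *\<^sub>v v) $ j = (\<theta> \<cdot>\<^sub>v v) $ j" .
  qed (simp add: B_def M_def v_def)
  moreover have "v \<in> carrier_vec n" "v \<noteq> 0\<^sub>v n"
    using deg(2) by (auto simp: v_def vec_eq_iff intro!: exI[of _ 0])
  ultimately have "eigenvector B v \<theta>" unfolding eigenvector_def using B by auto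
  hence "eigenvalue B \<theta>" unfolding eigenvalue_def by auto
  hence "poly (char_poly B) \<theta> = 0" using eigenvalue_root_char_poly[OF B] by simp
  also have "char_poly B = map_poly of_rat (char_poly M)"
    unfolding B_def by (rule of_rat_hom.char_poly_hom[OF M])
  finally have r: "poly (map_poly of_rat (char_poly M)) \<theta> = 0" .
  have "degree (char_poly M) = n" "coeff (char_poly M) n = 1" using degree_monic_char_poly[OF M] by auto
  moreover hence "char_poly M \<noteq> 0" by auto
  ultimately show ?thesis using r by blast
qed


abbreviation red :: "int poly \<Rightarrow> gf2 poly" where "red \<equiv> map_poly of_int"

definition Dv :: "complex \<Rightarrow> int poly \<Rightarrow> bool" where
  "Dv \<theta> p \<longleftrightarrow> (\<exists>q. poly (map_poly of_int p) \<theta> = 2 * poly (map_poly of_int q) \<theta>)"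

definition lift2 :: "gf2 poly \<Rightarrow> int poly" where
  "lift2 k = map_poly (\<lambda>x. if x = 0 then 0 else 1) k"

lemma red_lift2: "red (lift2 k) = k"
  unfolding lift2_def
proof (rule poly_eqI)
  fix i
  have "of_int (if coeff k i = 0 then 0 else 1) = coeff k i" using gf2_cases[of "coeff k i"] by auto
  thus "coeff (red (map_poly (\<lambda>x. if x = 0 then 0 else 1) k)) i = coeff k i"
    by (simp add: coeff_map_poly)
qed

lemma gf2_of_int_zero_iff: "(of_int k :: gf2) = 0 \<longleftrightarrow> even k"
  using gf2_of_int_even gf2_of_int_odd by (cases "even k") auto

lemma red_zero_imp_double: assumes "red d = 0" shows "d = Polynomial.smult 2 (map_poly (\<lambda>x. x div 2) d)"
proof (rule poly_eqI)
  fix i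
  have "(of_int (coeff d i) :: gf2) = 0" using arg_cong[OF assms, of "\<lambda>p. coeff p i"] by (simp add: coeff_map_poly)
  hence "even (coeff d i)" by (simp add: gf2_of_int_zero_iff)
  thus "coeff d i = coeff (Polynomial.smult 2 (map_poly (\<lambda>x. x div 2) d)) i" by (simp add: coeff_map_poly)
qed

lemma Dv_zero: "poly (map_poly of_int p) \<theta> = 0 \<Longrightarrow> Dv \<theta> p"
  unfolding Dv_def by (intro exI[of _ 0]) simp

lemma Dv_diff: assumes "Dv \<theta> p" "Dv \<theta> p'" shows "Dv \<theta> (p - p')"
proof -
  from assms obtain q q' where "poly (map_poly of_int p) \<theta> = 2 * poly (map_poly of_int q) \<theta>"
    "poly (map_poly of_int p') \<theta> = 2 * poly (map_poly of_int q') \<theta>" unfolding Dv_def by blast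
  hence "poly (map_poly of_int (p - p')) \<theta> = 2 * poly (map_poly of_int (q - q')) \<theta>"
    by (simp add: hom_distribs algebra_simps)
  thus ?thesis unfolding Dv_def by blast
qed

lemma Dv_mult: assumes "Dv \<theta> p" shows "Dv \<theta> (p * k)"
proof -
  from assms obtain q where "poly (map_poly of_int p) \<theta> = 2 * poly (map_poly of_int q) \<theta>"
    unfolding Dv_def by blast
  hence "poly (map_poly of_int (p * k)) \<theta> = 2 * poly (map_poly of_int (q * k)) \<theta>"
    by (simp add: hom_distribs algebra_simps)
  thus ?thesis unfolding Dv_def by blast
qed

lemma Dv_red_eq: assumes "Dv \<theta> p'" "red p = red p'" shows "Dv \<theta> p"
proof -
  have "red (p - p') = 0" using assms(2) by (simp add: hom_distribs)
  hence d: "p - p' = Polynomial.smult 2 (map_poly (\<lambda>x. x div 2) (p - p'))" by (rule red_zero_imp_double)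
  define w where "w = map_poly (\<lambda>x. x div 2) (p - p')"
  from assms(1) obtain q where q: "poly (map_poly of_int p') \<theta> = 2 * poly (map_poly of_int q) \<theta>" unfolding Dv_def by blast
  have "p = p' + Polynomial.smult 2 w" using d by (simp add: w_def algebra_simps)
  hence "poly (map_poly of_int p) \<theta> = poly (map_poly of_int p') \<theta> + 2 * poly (map_poly of_int w) \<theta>"
    by (simp add: hom_distribs)
  also have "\<dots> = 2 * poly (map_poly of_int (q + w)) \<theta>" using q by (simp add: hom_distribs algebra_simps)
  finally show ?thesis unfolding Dv_def by blast
qed

lemma ideal_generator:
  fixes \<theta> :: complex and r :: "int poly"
  assumes rc: "content r = 1" and rd: "degree r \<le> 4" and rr: "poly (map_poly of_int r) \<theta> = 0"
  shows "\<exists>h. h \<noteq> 0 \<and> degree h \<le> 4 \<and> (\<forall>p. Dv \<theta> p \<longleftrightarrow> h dvd red p)"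
proof -
  define I where "I = {red p | p. Dv \<theta> p}"
  have I_sub: "x - y \<in> I" if "x \<in> I" "y \<in> I" for x y
  proof -
    from that obtain p p' where "x = red p" "y = red p'" "Dv \<theta> p" "Dv \<theta> p'" unfolding I_def by blast
    thus ?thesis unfolding I_def by (intro CollectI exI[of _ "p - p'"]) (auto intro: Dv_diff simp: hom_distribs)
  qed
  have I_mult: "x * k \<in> I" if "x \<in> I" for x k
  proof -
    from that obtain p where "x = red p" "Dv \<theta> p" unfolding I_def by blast
    thus ?thesis unfolding I_def
      by (intro CollectI exI[of _ "p * lift2 k"]) (auto intro: Dv_mult simp: hom_distribs red_lift2)
  qed
  have rI: "red r \<in> I" unfolding I_def using Dv_zero[OF rr] by blast
  have r0: "red r \<noteq> 0"
  proof
    assume "red r = 0"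
    hence "r = Polynomial.smult 2 (map_poly (\<lambda>x. x div 2) r)" by (rule red_zero_imp_double)
    hence "content r = content (Polynomial.smult 2 (map_poly (\<lambda>x. x div 2) r))" by simp
    also have "\<dots> = 2 * content (map_poly (\<lambda>x. x div 2) r)" by (simp only: content_smult) simp
    finally have "2 dvd content r" by simp
    thus False using rc by simp
  qed
  define n0 where "n0 = (LEAST n. \<exists>x\<in>I. x \<noteq> 0 \<and> degree x = n)"
  have ex: "\<exists>x\<in>I. x \<noteq> 0 \<and> degree x = degree (red r)"
    by (rule bexI[OF _ rI]) (use r0 in simp)
  hence "\<exists>n. \<exists>x\<in>I. x \<noteq> 0 \<and> degree x = n" by blast
  hence "\<exists>x\<in>I. x \<noteq> 0 \<and> degree x = n0" unfolding n0_def by (rule LeastI_ex)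
  then obtain h where h: "h \<in> I" "h \<noteq> 0" "degree h = n0" by blast
  have hmin: "degree x \<ge> n0" if "x \<in> I" "x \<noteq> 0" for x
    unfolding n0_def using that by (intro Least_le) blast
  have "n0 \<le> degree (red r)" using hmin[OF rI r0] .
  also have "\<dots> \<le> degree r" by (rule degree_map_poly_le)
  finally have hdeg: "degree h \<le> 4" using rd h(3) by simp
  have dvdI: "h dvd x" if "x \<in> I" for x
  proof (rule ccontr)
    assume nd: "\<not> h dvd x"
    have "x mod h = x - h * (x div h)" by (rule minus_mult_div_eq_mod[symmetric])
    also have "\<dots> \<in> I" using that h(1) by (intro I_sub I_mult)
    finally have mI: "x mod h \<in> I" .
    have m0: "x mod h \<noteq> 0" using nd by (simp add: mod_eq_0_iff_dvd)
    have "degree (x mod h) < degree h" using degree_mod_less'[OF h(2) m0] .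
    with hmin[OF mI m0] h(3) show False by simp
  qed
  have "Dv \<theta> p \<longleftrightarrow> h dvd red p" for p
  proof
    assume "Dv \<theta> p" thus "h dvd red p" using dvdI unfolding I_def by blast
  next
    assume "h dvd red p"
    then obtain k where "red p = h * k" unfolding dvd_def by blast
    hence "red p \<in> I" using I_mult[OF h(1)] by simp
    then obtain p' where "red p = red p'" "Dv \<theta> p'" unfolding I_def by blast
    thus "Dv \<theta> p" using Dv_red_eq by blast
  qed
  thus ?thesis using h hdeg by blast
qed


lemma monogenic_contra:
  fixes \<theta> :: complex and r sa sg se :: "int poly" and a b c Q0 Q1 Q2 Q3 :: int
  assumes rc: "content r = 1" and rd: "degree r \<le> 4" and rr: "poly (map_poly of_int r) \<theta> = 0"
    and Fa: "poly (map_poly of_int sa) \<theta> ^ 4 + of_int a * poly (map_poly of_int sa) \<theta> ^ 3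
              + of_int b * poly (map_poly of_int sa) \<theta> + of_int c = 0"
    and oa: "odd a" and ob: "odd b" and oc: "odd c"
    and Gq: "poly (map_poly of_int sg) \<theta> ^ 2 = poly (map_poly of_int sg) \<theta> + of_int Q0
              + of_int Q1 * poly (map_poly of_int sa) \<theta> + of_int Q2 * poly (map_poly of_int sa) \<theta> ^ 2
              + of_int Q3 * poly (map_poly of_int sa) \<theta> ^ 3"
    and oQ: "odd (Q0 + Q1 + Q2 + Q3)"
    and Eid: "Dv \<theta> (se ^ 2 - se)" and nE: "\<not> Dv \<theta> se" and nE1: "\<not> Dv \<theta> (se - 1)"
  shows False
proof -
  obtain h where h: "h \<noteq> 0" "degree h \<le> 4" "\<And>p. Dv \<theta> p \<longleftrightarrow> h dvd red p"
    using ideal_generator[OF rc rd rr] by blast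
  define Pa where "Pa = sa ^ 4 + Polynomial.smult a (sa ^ 3) + Polynomial.smult b sa + [:c:]"
  have "poly (map_poly of_int Pa) \<theta> = 0" using Fa by (simp add: Pa_def hom_distribs)
  hence "h dvd red Pa" using h(3) Dv_zero by blast
  hence hPa: "h dvd red sa ^ 4 + red sa ^ 3 + red sa + [:1:]"
    using oa ob oc by (simp add: Pa_def hom_distribs gf2_of_int_odd)
  define Pg where "Pg = sg ^ 2 - sg - ([:Q0:] + Polynomial.smult Q1 sa + Polynomial.smult Q2 (sa ^ 2)
      + Polynomial.smult Q3 (sa ^ 3))"
  have "poly (map_poly of_int Pg) \<theta> = 0" using Gq by (simp add: Pg_def hom_distribs)
  hence "h dvd red Pg" using h(3) Dv_zero by blast
  hence hPg: "h dvd red sg ^ 2 - red sg - ([:of_int Q0:] + Polynomial.smult (of_int Q1) (red sa)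
      + Polynomial.smult (of_int Q2) (red sa ^ 2) + Polynomial.smult (of_int Q3) (red sa ^ 3))"
    by (simp add: Pg_def hom_distribs)
  have hroot: "\<forall>t. poly h t \<noteq> 0"
  proof (intro allI notI)
    fix t assume ht: "poly h t = 0"
    have z: "poly q t = 0" if "h dvd q" for q
    proof -
      from that obtain m where "q = h * m" unfolding dvd_def by blast
      thus ?thesis using ht by simp
    qed
    define u where "u = poly (red sa) t"
    define v where "v = poly (red sg) t"
    have "u ^ 4 + u ^ 3 + u + 1 = 0" using z[OF hPa] by (simp add: u_def)
    hence u1: "u = 1"
    proof -
      assume a: "u ^ 4 + u ^ 3 + u + 1 = 0"
      show "u = 1" using gf2_cases[of u] a by auto
    qed
    have "v ^ 2 - v - (of_int Q0 + of_int Q1 * u + of_int Q2 * u ^ 2 + of_int Q3 * u ^ 3) = 0"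
      using z[OF hPg] by (simp add: u_def v_def)
    hence "v ^ 2 - v - of_int (Q0 + Q1 + Q2 + Q3) = 0" using u1 by simp
    hence "v ^ 2 - v - 1 = 0" using oQ gf2_of_int_odd by metis
    thus False using gf2_cases[of v] by (auto simp: power2_eq_square)
  qed
  have "h dvd red (se ^ 2 - se)" using Eid h(3) by blast
  hence hE: "h dvd red se * (red se - 1)" by (simp add: hom_distribs power2_eq_square algebra_simps)
  have n1: "\<not> h dvd red se" using nE h(3) by blast
  have n2: "\<not> h dvd red se - 1" using nE1 h(3) by (simp add: hom_distribs)
  show False using gf2_final[OF h(1) h(2) hroot hE n1 n2] .
qed


lemma half_square_lemma: assumes "P^2 - 2*P = 4*Q" shows "(P/2)^2 = P/2 + (Q::complex)"
proof -
  have "P^2 = 4*Q + 2*P" using assms by (simp add: diff_eq_eq)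
  have "(P/2)^2 = P^2/4" by (simp add: power_divide)
  also have "\<dots> = (4*Q + 2*P)/4" by (simp add: \<open>P^2 = 4*Q + 2*P\<close>)
  also have "\<dots> = P/2 + Q" by (simp add: add_divide_distrib)
  finally show ?thesis .
qed

lemma gamma_identity:
  fixes x :: complex and A B C :: int
  assumes F: "x^4 + of_int (1+2*A) * x^3 + of_int (3+2*A+4*B) * x + of_int (7+4*A+4*B+8*C) = 0"
  shows "((x^3+4*x^2+6*x+3)/2)^2 = (x^3+4*x^2+6*x+3)/2
     + (of_int (-36 - 42*C - 21*B + 24*A*C + 12*A*B + 5*A^2 - 8*A^2*C - 4*A^2*B - 4*A^3)
     + of_int (-22 - 14*C - 28*B - 5*A + 4*A*C + 14*A*B + 5*A^2 - 4*A^2*B - 2*A^3) * x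
     + of_int (6 - 2*C - 8*B - 3*A + 2*A*B + A^2) * x^2
     + of_int (7 - B - 8*A + 5*A^2 - 2*A^3) * x^3)"
proof -
  define P where "P = x^3+4*x^2+6*x+3"
  define Q where "Q = of_int (-36 - 42*C - 21*B + 24*A*C + 12*A*B + 5*A^2 - 8*A^2*C - 4*A^2*B - 4*A^3)
     + of_int (-22 - 14*C - 28*B - 5*A + 4*A*C + 14*A*B + 5*A^2 - 4*A^2*B - 2*A^3) * x
     + of_int (6 - 2*C - 8*B - 3*A + 2*A*B + A^2) * x^2
     + of_int (7 - B - 8*A + 5*A^2 - 2*A^3) * (x^3::complex)"
  define K where "K = x^2 + (7 - 2*of_int A)*x + (21 - 12*of_int A + 4*of_int A^2)"
  define Fx where "Fx = x^4 + of_int (1+2*A) * x^3 + of_int (3+2*A+4*B) * x + of_int (7+4*A+4*B+8*C)"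
  have "P^2 - 2*P = K * Fx + 4 * Q"
    unfolding P_def Q_def K_def Fx_def
    by (simp add: algebra_simps power2_eq_square power3_eq_cube power4_eq_xxxx)
  hence "P^2 - 2*P = 4 * Q" using F by (simp add: Fx_def)
  hence "(P/2)^2 = P/2 + Q" by (rule half_square_lemma)
  thus ?thesis by (simp add: P_def Q_def)
qed

lemma R_alg_int:
  fixes x :: complex and A B C :: int
  assumes F: "x^4 + of_int (1+2*A) * x^3 + of_int (3+2*A+4*B) * x + of_int (7+4*A+4*B+8*C) = 0"
  defines "\<gamma> \<equiv> (x^3+4*x^2+6*x+3)/2"
  shows "algebraic_int x" "algebraic_int \<gamma>" "algebraic_int (x^2+3*x+3)" "algebraic_int (\<gamma> * (x + 2))"
proof -
  define Q0 where "Q0 = (-36 - 42*C - 21*B + 24*A*C + 12*A*B + 5*A^2 - 8*A^2*C - 4*A^2*B - 4*A^3)"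
  define Q1 where "Q1 = (-22 - 14*C - 28*B - 5*A + 4*A*C + 14*A*B + 5*A^2 - 4*A^2*B - 2*A^3)"
  define Q2 where "Q2 = (6 - 2*C - 8*B - 3*A + 2*A*B + A^2)"
  define Q3 where "Q3 = (7 - B - 8*A + 5*A^2 - 2*A^3)"
  have G: "\<gamma>^2 = \<gamma> + (of_int Q0 + of_int Q1 * x + of_int Q2 * x^2 + of_int Q3 * x^3)"
    using gamma_identity[OF F] unfolding \<gamma>_def Q0_def Q1_def Q2_def Q3_def .
  define a' where "a' = 1+2*A"
  define b' where "b' = 3+2*A+4*B"
  define c' where "c' = 7+4*A+4*B+8*C"
  have x4: "x^4 = - (of_int a' * x^3 + of_int b' * x + of_int c')"
  proof -
    have "x^4 + (of_int a' * x^3 + of_int b' * x + of_int c') = 0"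
      using F unfolding a'_def b'_def c'_def by (simp only: add.assoc)
    thus ?thesis by (simp only: eq_neg_iff_add_eq_0)
  qed
  define g where "g k = x ^ (k mod 4) * \<gamma> ^ (k div 4)" for k
  have g: "g 0 = 1" "g 1 = x" "g 2 = x^2" "g 3 = x^3" "g 4 = \<gamma>" "g 5 = x * \<gamma>" "g 6 = x^2 * \<gamma>" "g 7 = x^3 * \<gamma>"
    by (simp_all add: g_def)
  have gen: "g k \<in> zspan 8 g" if "k < 8" for k using that by (rule zspan_gen)
  have k8: "k = 0 \<or> k = 1 \<or> k = 2 \<or> k = 3 \<or> k = 4 \<or> k = 5 \<or> k = 6 \<or> k = 7" if "k < (8::nat)" for k
    using that by linarith
  have mx: "mulS 8 g x" unfolding mulS_def
  proof (intro allI impI)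
    fix k :: nat assume "k < 8"
    have c3: "x * x^3 = - (of_int a' * g 3 + of_int b' * g 1 + of_int c' * g 0)"
      using x4 g by (simp add: power_Suc[symmetric] del: power_Suc)
    have "x * (x^3 * \<gamma>) = x^4 * \<gamma>" by (simp add: power_numeral_reduce mult.assoc)
    also have "\<dots> = - (of_int a' * x^3 + of_int b' * x + of_int c') * \<gamma>" by (simp only: x4)
    also have "\<dots> = - (of_int a' * g 7 + of_int b' * g 5 + of_int c' * g 4)" using g by (simp add: algebra_simps)
    finally have c7: "x * (x^3 * \<gamma>) = - (of_int a' * g 7 + of_int b' * g 5 + of_int c' * g 4)" .
    have s3: "- (of_int a' * g 3 + of_int b' * g 1 + of_int c' * g 0) \<in> zspan 8 g"
      by (intro zspan_uminus zspan_add zspan_smult gen) auto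
    have s7: "- (of_int a' * g 7 + of_int b' * g 5 + of_int c' * g 4) \<in> zspan 8 g"
      by (intro zspan_uminus zspan_add zspan_smult gen) auto
    from k8[OF \<open>k < 8\<close>] show "x * g k \<in> zspan 8 g"
    proof (elim disjE)
      assume "k = 0" thus ?thesis using gen[of 1] g by simp
    next
      assume "k = 1" thus ?thesis using gen[of 2] g by (simp add: power2_eq_square)
    next
      assume "k = 2" thus ?thesis using gen[of 3] g by (simp add: power2_eq_square power3_eq_cube mult.assoc)
    next
      assume "k = 3" thus ?thesis using s3 c3 g by simp
    next
      assume "k = 4" thus ?thesis using gen[of 5] g by simp
    next
      assume "k = 5" thus ?thesis using gen[of 6] g by (simp add: power2_eq_square mult.assoc)
    next
      assume "k = 6" thus ?thesis using gen[of 7] g by (simp add: power2_eq_square power3_eq_cube mult.assoc)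
    next
      assume "k = 7" thus ?thesis using s7 c7 g by simp
    qed
  qed
  have xpow: "x ^ m \<in> zspan 8 g" for m
  proof (induction m)
    case 0 thus ?case using gen[of 0] g by simp
  next
    case (Suc m) thus ?case using mulS_zspan[OF mx Suc] by simp
  qed
  have qx: "x ^ i * (of_int Q0 + of_int Q1 * x + of_int Q2 * x^2 + of_int Q3 * x^3) \<in> zspan 8 g" for i
  proof -
    have "x ^ i * (of_int Q0 + of_int Q1 * x + of_int Q2 * x^2 + of_int Q3 * x^3)
        = of_int Q0 * x^i + of_int Q1 * x^(i+1) + of_int Q2 * x^(i+2) + of_int Q3 * x^(i+3)"
      by (simp add: algebra_simps power_add power2_eq_square power3_eq_cube)
    also have "\<dots> \<in> zspan 8 g" by (intro zspan_add zspan_smult xpow)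
    finally show ?thesis .
  qed
  have mg: "mulS 8 g \<gamma>" unfolding mulS_def
  proof (intro allI impI)
    fix k :: nat assume "k < 8"
    have sq: "\<gamma> * (x^i * \<gamma>) = x^i * \<gamma> + x ^ i * (of_int Q0 + of_int Q1 * x + of_int Q2 * x^2 + of_int Q3 * x^3)"
      for i :: nat
    proof -
      have "\<gamma> * (x^i * \<gamma>) = x^i * \<gamma>^2" by (simp add: power2_eq_square)
      also have "\<dots> = x^i * \<gamma> + x ^ i * (of_int Q0 + of_int Q1 * x + of_int Q2 * x^2 + of_int Q3 * x^3)"
        unfolding G by (simp add: algebra_simps)
      finally show ?thesis .
    qed
    have s: "\<gamma> * (x^i * \<gamma>) \<in> zspan 8 g" if "x^i * \<gamma> \<in> zspan 8 g" for i
      unfolding sq using that qx by (rule zspan_add)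
    from k8[OF \<open>k < 8\<close>] show "\<gamma> * g k \<in> zspan 8 g"
    proof (elim disjE)
      assume "k = 0" thus ?thesis using gen[of 4] g by simp
    next
      assume "k = 1" thus ?thesis using gen[of 5] g by (simp add: mult.commute)
    next
      assume "k = 2" thus ?thesis using gen[of 6] g by (simp add: mult.commute)
    next
      assume "k = 3" thus ?thesis using gen[of 7] g by (simp add: mult.commute)
    next
      assume "k = 4" thus ?thesis using s[of 0] gen[of 4] g by simp
    next
      assume "k = 5" thus ?thesis using s[of 1] gen[of 5] g by simp
    next
      assume "k = 6" thus ?thesis using s[of 2] gen[of 6] g by simp
    next
      assume "k = 7" thus ?thesis using s[of 3] gen[of 7] g by simp
    qed
  qed
  have ai: "algebraic_int y" if "mulS 8 g y" for y
    using that g(1) by (intro mulS_algebraic_int[of 0 8 g]) auto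
  show "algebraic_int x" using ai[OF mx] .
  show "algebraic_int \<gamma>" using ai[OF mg] .
  show "algebraic_int (x^2+3*x+3)" using mx by (intro ai mulS_intros)
  show "algebraic_int (\<gamma> * (x + 2))" using mx mg by (intro ai mulS_intros)
qed


lemma quartic_at_quad_root:
  fixes r a b c :: complex
  assumes "r^2 + 3*r + 3 = 0"
  shows "r^4 + a*r^3 + b*r + c = (c + 9*a - 18) + (b + 6*a - 9) * r"
proof -
  have "r^4 + a*r^3 + b*r + c = (r^2 + 3*r + 3) * (r^2 + (a-3)*r + (6-3*a)) + ((c + 9*a - 18) + (b + 6*a - 9) * r)"
    by (simp add: algebra_simps power2_eq_square power3_eq_cube power4_eq_xxxx)
  thus ?thesis using assms by simp
qed

lemma norm_e:
  fixes a b c :: int and as :: "complex list"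
  assumes roots: "map_poly of_int [:c, b, 0, a, 1:] = (\<Prod>z\<leftarrow>as. [:-z,1:])" and len: "length as = 4"
  shows "(\<Prod>z\<leftarrow>as. poly (map_poly of_rat [:3/2,3/2,1/2:]) z) =
     of_int ((9*a+c-18)^2 - 3*(9*a+c-18)*(6*a+b-9) + 3*(6*a+b-9)^2) / 16"
proof -
  obtain r1 r2 :: complex where r: "r1 + r2 = -3" "r1 * r2 = 3" using exists_quad_roots[of 3 3] by blast
  have rr: "r^2 + 3*r + 3 = 0" if "r = r1 \<or> r = r2" for r
  proof -
    have "r^2 + 3*r + 3 = r^2 - (r1 + r2) * r + r1 * r2" using r by simp
    also have "\<dots> = (r - r1) * (r - r2)" by (simp add: algebra_simps power2_eq_square)
    also have "\<dots> = 0" using that by auto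
    finally show ?thesis .
  qed
  define U :: complex where "U = of_int c + 9 * of_int a - 18"
  define V :: complex where "V = of_int b + 6 * of_int a - 9"
  have Fr: "poly (map_poly of_int [:c, b, 0, a, 1:]) r = U + V * r" if "r = r1 \<or> r = r2" for r
  proof -
    have "poly (map_poly of_int [:c, b, 0, a, 1:]) r = r^4 + of_int a * r^3 + of_int b * r + of_int c"
      by (simp add: algebra_simps power2_eq_square power3_eq_cube power4_eq_xxxx)
    also have "\<dots> = U + V * r" unfolding U_def V_def by (rule quartic_at_quad_root[OF rr[OF that]])
    finally show ?thesis .
  qed
  have "(\<Prod>z\<leftarrow>as. poly (map_poly of_rat [:3/2,3/2,1/2:]) z) = (\<Prod>z\<leftarrow>as. (z^2 + 3*z + 3) / 2)"
    by (rule arg_cong[where f=prod_list], rule map_cong) (auto simp: field_simps power2_eq_square of_rat_divide)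
  also have "\<dots> = (\<Prod>z\<leftarrow>as. z^2 + 3*z + 3) / 2 ^ length as" by (rule prod_list_div_const)
  also have "(\<Prod>z\<leftarrow>as. z^2 + 3*z + 3) = poly (map_poly of_int [:c, b, 0, a, 1:]) r1 * poly (map_poly of_int [:c, b, 0, a, 1:]) r2"
    using norm_quadratic[OF roots _ r] len by simp
  also have "\<dots> = (U + V * r1) * (U + V * r2)" using Fr by simp
  also have "\<dots> = U^2 + U * V * (r1 + r2) + V^2 * (r1 * r2)" by (simp add: algebra_simps power2_eq_square)
  also have "\<dots> = U^2 - 3 * U * V + 3 * V^2" using r by simp
  also have "U^2 - 3 * U * V + 3 * V^2 = of_int ((9*a+c-18)^2 - 3*(9*a+c-18)*(6*a+b-9) + 3*(6*a+b-9)^2)"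
    by (simp add: U_def V_def algebra_simps power2_eq_square)
  finally show ?thesis using len by simp
qed

lemma norm_e1:
  fixes a b c :: int and as :: "complex list"
  assumes roots: "map_poly of_int [:c, b, 0, a, 1:] = (\<Prod>z\<leftarrow>as. [:-z,1:])" and len: "length as = 4"
  shows "(\<Prod>z\<leftarrow>as. poly (map_poly of_rat [:1,3/2,1/2:]) z) =
     of_int ((1 - a - b + c) * (16 - 8*a - 2*b + c)) / 16"
proof -
  have ev: "even (length as)" using len by simp
  have "(\<Prod>z\<leftarrow>as. poly (map_poly of_rat [:1,3/2,1/2:]) z) = (\<Prod>z\<leftarrow>as. ((z - (-1)) * (z - (-2))) / 2)"
    by (rule arg_cong[where f=prod_list], rule map_cong) (auto simp: field_simps power2_eq_square of_rat_divide)
  also have "\<dots> = (\<Prod>z\<leftarrow>as. (z - (-1)) * (z - (-2))) / 2 ^ length as" by (rule prod_list_div_const)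
  also have "(\<Prod>z\<leftarrow>as. (z - (-1)) * (z - (-2))) = (\<Prod>z\<leftarrow>as. z - (-1)) * (\<Prod>z\<leftarrow>as. z - (-2))"
    by (rule prod_list_mult_map)
  also have "\<dots> = poly (map_poly of_int [:c, b, 0, a, 1:]) (-1) * poly (map_poly of_int [:c, b, 0, a, 1:]) (-2)"
    using norm_linear[OF roots ev, of "-1"] norm_linear[OF roots ev, of "-2"] by simp
  also have "\<dots> = of_int ((1 - a - b + c) * (16 - 8*a - 2*b + c))"
    by (simp add: algebra_simps)
  finally show ?thesis using len by simp
qed

lemma not16_4odd: "odd (w::int) \<Longrightarrow> \<not> 16 dvd 4 * w"
proof
  assume "odd w" "16 dvd 4 * w"
  then obtain k where "4 * w = 16 * k" by (auto elim: dvdE)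
  hence "w = 2 * (2 * k)" by simp
  with \<open>odd w\<close> show False by simp
qed

theorem corollary2p2:
  fixes a b c :: int and \<alpha> :: complex
  defines "F \<equiv> [:c, b, 0, a, 1:] :: int poly"
  assumes irr: "irreducible (map_poly (of_int :: int \<Rightarrow> rat) F)"
    and root: "poly (map_poly of_int F) \<alpha> = 0"
    and cases: "(a mod 8 = 1 \<and> b mod 8 = 3 \<and> c mod 8 = 7)
             \<or> (a mod 8 = 5 \<and> ((b mod 8 = 3 \<and> c mod 8 = 3)
                                   \<or> (b mod 8 = 7 \<and> c mod 8 = 7)))
             \<or> (a mod 8 = 7 \<and> c mod 8 = 7 \<and> b mod 8 = 5)"
  shows "\<not> monogenic (simple_ext_Q \<alpha>)"
proof
  assume "monogenic (simple_ext_Q \<alpha>)"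
  then obtain \<theta> where \<theta>O: "\<theta> \<in> ring_of_integers (simple_ext_Q \<alpha>)"
    and OK: "ring_of_integers (simple_ext_Q \<alpha>) = int_poly_ring \<theta>"
    unfolding monogenic_def by blast
  have oa: "odd a" using cases by presburger
  have d4: "4 dvd (b - a - 2)" using cases by presburger
  have d8: "8 dvd (c - a - b - 3)" using cases by presburger
  obtain A where A: "a = 2 * A + 1" using oa by (auto elim: oddE)
  obtain B where B: "b - a - 2 = 4 * B" using d4 by (auto elim: dvdE)
  obtain C where C: "c - a - b - 3 = 8 * C" using d8 by (auto elim: dvdE)
  have a: "a = 1 + 2*A" and b: "b = 3 + 2*A + 4*B" and c: "c = 7 + 4*A + 4*B + 8*C"
    using A B C by linarith+
  have ob: "odd b" and oc: "odd c" unfolding b c by simp_all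
  have Fx: "\<alpha>^4 + of_int a * \<alpha>^3 + of_int b * \<alpha> + of_int c = 0"
    using root by (simp add: F_def algebra_simps power2_eq_square power3_eq_cube power4_eq_xxxx)
  have FxABC: "\<alpha>^4 + of_int (1+2*A) * \<alpha>^3 + of_int (3+2*A+4*B) * \<alpha> + of_int (7+4*A+4*B+8*C) = 0"
    using Fx unfolding a b c .
  define FQ where "FQ = map_poly (of_int :: int \<Rightarrow> rat) F"
  have FQz: "poly (map_poly of_rat FQ) z = poly (map_poly of_int F) z" for z :: complex
    by (simp add: FQ_def map_poly_map_poly o_def)
  have FQ\<alpha>: "poly (map_poly of_rat FQ) \<alpha> = 0" using root FQz by simp
  have degFQ: "degree FQ = 4" by (simp add: FQ_def F_def)
  have irrQ: "irreducible FQ" using irr by (simp add: FQ_def)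
  obtain as where as: "Polynomial.smult (Polynomial.coeff (map_poly of_int F :: complex poly) (degree (map_poly of_int F :: complex poly)))
      (\<Prod>a\<leftarrow>as. [:- a, 1:]) = map_poly of_int F" "length as = degree (map_poly of_int F :: complex poly)"
    using fundamental_theorem_algebra_factorized by blast
  have roots: "map_poly of_int F = (\<Prod>z\<leftarrow>as. [:-z,1:])" using as(1) by (simp add: F_def)
  have len: "length as = 4" using as(2) by (simp add: F_def)
  have rootsQ: "poly (map_poly of_rat FQ) z = 0" if "z \<in> set as" for z
  proof -
    have "poly (\<Prod>z\<leftarrow>as. [:-z,1:]) z = (\<Prod>w\<leftarrow>as. z - w)" by (rule poly_linear_prod)
    also have "\<dots> = 0" using that by (simp add: prod_list_zero_iff)
    finally show ?thesis using FQz roots by simp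
  qed
  have inZ: "\<exists>s. x = poly (map_poly of_int s) \<theta>" if "x = poly (map_poly of_rat p) \<alpha>" "algebraic_int x" for x p
  proof -
    have "x \<in> ring_of_integers (simple_ext_Q \<alpha>)"
      using that unfolding ring_of_integers_def simple_ext_Q_def by blast
    thus ?thesis unfolding OK int_poly_ring_def by blast
  qed
  have OKai: "algebraic_int x" if "x = poly (map_poly of_int s) \<theta>" for x s
  proof -
    have "x \<in> ring_of_integers (simple_ext_Q \<alpha>)" unfolding OK int_poly_ring_def using that by blast
    thus ?thesis unfolding ring_of_integers_def by blast
  qed
  define \<gamma> where "\<gamma> = (\<alpha>^3+4*\<alpha>^2+6*\<alpha>+3)/2"
  define e where "e = \<alpha>^2+3*\<alpha>+3"
  have ai: "algebraic_int \<alpha>" "algebraic_int \<gamma>" "algebraic_int e" "algebraic_int (\<gamma> * (\<alpha> + 2))"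
    using R_alg_int[OF FxABC] unfolding \<gamma>_def e_def by auto
  have pa: "\<alpha> = poly (map_poly of_rat [:0,1:]) \<alpha>" by simp
  have pg: "\<gamma> = poly (map_poly of_rat [:3/2,3,2,1/2:]) \<alpha>"
    by (simp add: \<gamma>_def field_simps power2_eq_square power3_eq_cube of_rat_divide)
  have pe: "e = poly (map_poly of_rat [:3,3,1:]) \<alpha>"
    by (simp add: e_def field_simps power2_eq_square)
  have pw: "\<gamma> * (\<alpha> + 2) = poly (map_poly of_rat ([:3/2,3,2,1/2:] * [:2,1:])) \<alpha>"
  proof -
    have "poly (map_poly of_rat ([:3/2,3,2,1/2:] * [:2,1:])) \<alpha> =
        poly (map_poly of_rat [:3/2,3,2,1/2:]) \<alpha> * poly (map_poly of_rat [:2,1:]) \<alpha>"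
      by (simp only: of_rat_poly_hom.hom_mult poly_mult)
    thus ?thesis using pg by (simp add: add.commute)
  qed
  obtain sa where sa: "\<alpha> = poly (map_poly of_int sa) \<theta>" using inZ[OF pa ai(1)] by blast
  obtain sg where sg: "\<gamma> = poly (map_poly of_int sg) \<theta>" using inZ[OF pg ai(2)] by blast
  obtain se where se: "e = poly (map_poly of_int se) \<theta>" using inZ[OF pe ai(3)] by blast
  obtain sw where sw: "\<gamma> * (\<alpha> + 2) = poly (map_poly of_int sw) \<theta>" using inZ[OF pw ai(4)] by blast
  \<comment> \<open>a polynomial of degree 4 killing theta, with nonzero reduction mod 2\<close>
  obtain q\<theta> where q\<theta>: "\<theta> = poly (map_poly of_rat q\<theta>) \<alpha>"
    using \<theta>O unfolding ring_of_integers_def simple_ext_Q_def by blast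
  obtain \<chi> where \<chi>: "\<chi> \<noteq> 0" "degree \<chi> = 4" "poly (map_poly of_rat \<chi>) \<theta> = 0"
    using field_elem_charpoly[OF degFQ _ FQ\<alpha> q\<theta>] by auto
  obtain r where r: "content r = 1" "degree r = 4" "poly (map_poly of_int r) \<theta> = 0"
    using rat_poly_root_to_int[OF \<chi>(1,3)] \<chi>(2) by auto
  define Q0 where "Q0 = (-36 - 42*C - 21*B + 24*A*C + 12*A*B + 5*A^2 - 8*A^2*C - 4*A^2*B - 4*A^3)"
  define Q1 where "Q1 = (-22 - 14*C - 28*B - 5*A + 4*A*C + 14*A*B + 5*A^2 - 4*A^2*B - 2*A^3)"
  define Q2 where "Q2 = (6 - 2*C - 8*B - 3*A + 2*A*B + A^2)"
  define Q3 where "Q3 = (7 - B - 8*A + 5*A^2 - 2*A^3)"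
  have Gq: "\<gamma>^2 = \<gamma> + of_int Q0 + of_int Q1 * \<alpha> + of_int Q2 * \<alpha>^2 + of_int Q3 * \<alpha>^3"
    using gamma_identity[OF FxABC] unfolding \<gamma>_def Q0_def Q1_def Q2_def Q3_def by (simp add: add.assoc)
  have "Q0 + Q1 + Q2 + Q3 = 2 * (-29*C - 29*B + 14*A*C + 14*A*B + 8*A^2 - 4*A^2*C - 4*A^2*B - 4*A^3 - 8*A) - 45"
    unfolding Q0_def Q1_def Q2_def Q3_def by (simp add: algebra_simps)
  hence oQ: "odd (Q0 + Q1 + Q2 + Q3)" by simp
  have Eid: "Dv \<theta> (se ^ 2 - se)"
  proof -
    have id: "e^2 - e = 2 * (\<gamma> * (\<alpha> + 2))"
      unfolding e_def \<gamma>_def by (simp add: algebra_simps power2_eq_square power3_eq_cube power4_eq_xxxx)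
    have "poly (map_poly of_int (se ^ 2 - se)) \<theta> = e^2 - e" using se by (simp add: hom_distribs)
    also have "\<dots> = 2 * (\<gamma> * (\<alpha> + 2))" by (rule id)
    also have "\<dots> = 2 * poly (map_poly of_int sw) \<theta>" by (simp only: sw)
    finally have "poly (map_poly of_int (se ^ 2 - se)) \<theta> = 2 * poly (map_poly of_int sw) \<theta>" .
    thus ?thesis unfolding Dv_def by blast
  qed
  have nE: "\<not> Dv \<theta> se"
  proof
    assume "Dv \<theta> se"
    then obtain q where "e = 2 * poly (map_poly of_int q) \<theta>" unfolding Dv_def se by blast
    hence "algebraic_int (e / 2)" using OKai by simp
    moreover have "e / 2 = poly (map_poly of_rat [:3/2,3/2,1/2:]) \<alpha>"
      by (simp add: e_def field_simps power2_eq_square of_rat_divide)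
    ultimately have "algebraic_int (poly (map_poly of_rat [:3/2,3/2,1/2:]) \<alpha>)" by simp
    moreover have "\<not> algebraic_int (poly (map_poly of_rat [:3/2,3/2,1/2:]) \<alpha>)"
    proof (rule not_algebraic_int_by_norm[OF irrQ FQ\<alpha> rootsQ])
      show "(\<Prod>z\<leftarrow>as. poly (map_poly of_rat [:3/2,3/2,1/2:]) z) =
        of_int ((9*a+c-18)^2 - 3*(9*a+c-18)*(6*a+b-9) + 3*(6*a+b-9)^2) / 16"
        using norm_e[OF roots[unfolded F_def] len] .
      define u where "u = -1 + 11*A + 2*B + 4*C"
      define v where "v = 7*A + 2*B"
      have eqN: "(9*a+c-18)^2 - 3*(9*a+c-18)*(6*a+b-9) + 3*(6*a+b-9)^2 = 4 * (u^2 - 3*u*v + 3*v^2)"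
        unfolding a b c u_def v_def by (simp add: algebra_simps power2_eq_square)
      have oddN: "odd (u^2 - 3*u*v + 3*v^2)"
      proof -
        show ?thesis
        proof (cases "even A")
          case True
          hence "odd u" "even v" unfolding u_def v_def by simp_all
          thus ?thesis by (simp add: power2_eq_square)
        next
          case False
          hence "even u" "odd v" unfolding u_def v_def by simp_all
          thus ?thesis by (simp add: power2_eq_square)
        qed
      qed
      show "\<not> 16 dvd ((9*a+c-18)^2 - 3*(9*a+c-18)*(6*a+b-9) + 3*(6*a+b-9)^2)"
        unfolding eqN by (rule not16_4odd[OF oddN])
    qed
    ultimately show False by contradiction
  qed
  have nE1: "\<not> Dv \<theta> (se - 1)"
  proof
    assume "Dv \<theta> (se - 1)"
    then obtain q where "e - 1 = 2 * poly (map_poly of_int q) \<theta>" unfolding Dv_def using se by (auto simp: hom_distribs)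
    hence "algebraic_int ((e - 1) / 2)" using OKai by simp
    moreover have "(e - 1) / 2 = poly (map_poly of_rat [:1,3/2,1/2:]) \<alpha>"
      by (simp add: e_def field_simps power2_eq_square of_rat_divide)
    ultimately have "algebraic_int (poly (map_poly of_rat [:1,3/2,1/2:]) \<alpha>)" by simp
    moreover have "\<not> algebraic_int (poly (map_poly of_rat [:1,3/2,1/2:]) \<alpha>)"
    proof (rule not_algebraic_int_by_norm[OF irrQ FQ\<alpha> rootsQ])
      show "(\<Prod>z\<leftarrow>as. poly (map_poly of_rat [:1,3/2,1/2:]) z) =
        of_int ((1 - a - b + c) * (16 - 8*a - 2*b + c)) / 16"
        using norm_e1[OF roots[unfolded F_def] len] .
      have eqN: "(1 - a - b + c) * (16 - 8*a - 2*b + c) = 4 * ((1 + 2*C) * (9 - 16*A - 4*B + 8*C))"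
        unfolding a b c by (simp add: algebra_simps)
      have oddN: "odd ((1 + 2*C) * (9 - 16*A - 4*B + 8*C))" by simp
      show "\<not> 16 dvd ((1 - a - b + c) * (16 - 8*a - 2*b + c))"
        unfolding eqN by (rule not16_4odd[OF oddN])
    qed
    ultimately show False by contradiction
  qed
  show False
    using monogenic_contra[OF r(1) _ r(3), of sa a b c sg Q0 Q1 Q2 Q3 se] r(2) Fx oa ob oc Gq oQ Eid nE nE1
    unfolding sa sg by simp
qed

end
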